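(* Consider the two-dimensional forward Euler finite difference scheme $\mathbf{u}_{ij}^{n+1}=\mathbf{u}_{ij}^n-\lambda^x(\mathbf{f}_{i+1/2,j}-\mathbf{f}_{i-1/2,j})-\lambda^y(\mathbf{g}_{i,j+1/2}-\mathbf{g}_{i,j-1/2})$, $\lambda^x=\Delta t/\Delta x$, $\lambda^y=\Delta t/\Delta y$, with numerical fluxes $\mathbf{f}_{i+1/2,j}=\alpha^x_{i+1/2,j}(\mathbf{w}^{x,+}_{i+1/2,j}-\mathbf{w}^{x,-}_{i+1/2,j})$ and $\mathbf{g}_{i,j+1/2}=\alpha^y_{i,j+1/2}(\mathbf{w}^{y,+}_{i,j+1/2}-\mathbf{w}^{y,-}_{i,j+1/2})$, where $\mathbf{w}^{x,\pm}_{i+1/2,j},\mathbf{w}^{y,\pm}_{i,j+1/2}\in\mathbb{R}^6$ are given interface values, $\alpha^x_{i+1/2,j}=\max\{\alpha^x(\mathbf{u}^n_{ij}),\alpha^x(\mathbf{u}^n_{i+1,j})\}$, $\alpha^y_{i,j+1/2}=\max\{\alpha^y(\mathbf{u}^n_{ij}),\alpha^y(\mathbf{u}^n_{i,j+1})\}$. Let $\mathbf{w}^{x,\pm}_{ij}=\mathbf{w}^{x,\pm}(\mathbf{u}^n_{ij})$, $\mathbf{w}^{y,\pm}_{ij}=\mathbf{w}^{y,\pm}(\mathbf{u}^n_{ij})$, and $\mathbf{q}^{x,+,*}_{ij}=\frac{1}{1-\hat w_N}(\mathbf{w}^{x,+}_{ij}-\hat w_N\mathbf{w}^{x,+}_{i+1/2,j})$,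 $\mathbf{q}^{x,-,*}_{ij}=\frac{1}{1-\hat w_1}(\mathbf{w}^{x,-}_{ij}-\hat w_1\mathbf{w}^{x,-}_{i-1/2,j})$, $\mathbf{q}^{y,+,*}_{ij}=\frac{1}{1-\hat w_N}(\mathbf{w}^{y,+}_{ij}-\hat w_N\mathbf{w}^{y,+}_{i,j+1/2})$, $\mathbf{q}^{y,-,*}_{ij}=\frac{1}{1-\hat w_1}(\mathbf{w}^{y,-}_{ij}-\hat w_1\mathbf{w}^{y,-}_{i,j-1/2})$. Assume that for all $i,j$: (1) $\mathbf{u}^n_{ij}\in\mathbb{U}_{\mathrm{ad}}$; (2) $\mathbf{q}^{x,\pm,*}_{ij}\in\mathbb{U}_{\mathrm{ad}}$ and $\mathbf{w}^{x,\pm}_{i+1/2,j}\in\mathbb{U}_{\mathrm{ad}}$; (3) $\mathbf{q}^{y,\pm,*}_{ij}\in\mathbb{U}_{\mathrm{ad}}$ and $\mathbf{w}^{y,\pm}_{i,j+1/2}\in\mathbb{U}_{\mathrm{ad}}$. Then the scheme is positivity preserving, i.e. $\mathbf{u}^{n+1}_{ij}\in\mathbb{U}_{\mathrm{ad}}$ for all $i,j$, provided $\left(\frac{\alpha^x}{\Delta x}+\frac{\alpha^y}{\Delta y}\right)\Delta t\le\hat w_1$, where $\alpha^x=\max_{i,j}\alpha^x(\mathbf{u}^n_{ij})$ and $\alpha^y=\max_{i,j}\alpha^y(\mathbf{u}^n_{ij})$.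
   Context: Ten-Moment equations in 2-D: conservative variable $\mathbf{u}=(\rho,\rho v_1,\rho v_2,E_{11},E_{12},E_{22})^\top$; pressure components $p_{11}=2E_{11}-\rho v_1^2$, $p_{12}=2E_{12}-\rho v_1v_2$, $p_{22}=2E_{22}-\rho v_2^2$; $\mathbb{U}_{\mathrm{ad}}=\{\mathbf{u}:\rho>0,\ \mathbf{p}\text{ positive definite}\}$. Fluxes: $\mathbf{f}(\mathbf{u})=\big(\rho v_1,\ \rho v_1^2+p_{11},\ \rho v_1v_2+p_{12},\ (E_{11}+p_{11})v_1,\ E_{12}v_1+\tfrac12(p_{11}v_2+p_{12}v_1),\ E_{22}v_1+p_{12}v_2\big)^\top$ and $\mathbf{g}(\mathbf{u})=\big(\rho v_2,\ \rho v_1v_2+p_{12},\ \rho v_2^2+p_{22},\ E_{11}v_2+p_{12}v_1,\ E_{12}v_2+\tfrac12(p_{12}v_2+p_{22}v_1),\ (E_{22}+p_{22})v_2\big)^\top$. Wave speeds $\alpha^x(\mathbf{u})=|v_1|+\sqrt{3p_{11}/\rho}$, $\alpha^y(\mathbf{u})=|v_2|+\sqrt{3p_{22}/\rho}$. $\mathbf{w}^{x,\pm}(\mathbf{u})=\frac12(\mathbf{u}\pm\mathbf{f}(\mathbf{u})/\alpha^x(\mathbf{u}))$, $\mathbf{w}^{y,\pm}(\mathbf{u})=\frac12(\mathbf{u}\pm\mathbf{g}(\mathbf{u})/\alpha^y(\mathbf{u}))$. Uniform rectangular mesh with nodes $(x_i,y_j)$, spacings $\Delta x,\Delta y$. $\hat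 w_1,\dots,\hat w_N$ are the normalized weights of the $N$-point Gauss–Lobatto rule with $N\ge4$, so $\hat w_1=\hat w_N$ (for $N=4$, $\hat w_1=1/12$). In the paper the interface values are $\mathbf{w}^{x,\pm}_{i+1/2,j}=\pm\mathbf{f}^\pm_{i+1/2,j}/\alpha^x_{i+1/2,j}$ with $\mathbf{f}^\pm_{i+1/2,j}$ WENO reconstructions of the split fluxes $\frac12(\mathbf{f}(\mathbf{u})\pm\alpha^x_{i+1/2,j}\mathbf{u})$ (similarly in $y$), possibly modified by a scaling limiter. *)

theory Defs
  imports "HOL-Analysis.Analysis"
begin

type_synonym state = "real ^ 6"

text \<open>Conservative variables u = (rho, rho v1, rho v2, E11, E12, E22).\<close>
definition rho :: "state \<Rightarrow> real" where "rho u = u $ 1"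
definition vel1 :: "state \<Rightarrow> real" where "vel1 u = u $ 2 / u $ 1"
definition vel2 :: "state \<Rightarrow> real" where "vel2 u = u $ 3 / u $ 1"
definition E11 :: "state \<Rightarrow> real" where "E11 u = u $ 4"
definition E12 :: "state \<Rightarrow> real" where "E12 u = u $ 5"
definition E22 :: "state \<Rightarrow> real" where "E22 u = u $ 6"

definition p11 :: "state \<Rightarrow> real" where "p11 u = 2 * E11 u - rho u * vel1 u ^ 2"
definition p12 :: "state \<Rightarrow> real" where "p12 u = 2 * E12 u - rho u * vel1 u * vel2 u"
definition p22 :: "state \<Rightarrow> real" where "p22 u = 2 * E22 u - rho u * vel2 u ^ 2"

definition admissible :: "state \<Rightarrow> bool" where
  "admissible u \<longleftrightarrow> rho u > 0 \<and>
     (\<forall>a b :: real. (a, b) \<noteq> (0, 0) \<longrightarrow>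
        p11 u * a^2 + 2 * p12 u * a * b + p22 u * b^2 > 0)"

definition fluxf :: "state \<Rightarrow> state" where
  "fluxf u = vector
     [ rho u * vel1 u,
       rho u * vel1 u ^ 2 + p11 u,
       rho u * vel1 u * vel2 u + p12 u,
       (E11 u + p11 u) * vel1 u,
       E12 u * vel1 u + (p11 u * vel2 u + p12 u * vel1 u) / 2,
       E22 u * vel1 u + p12 u * vel2 u ]"

definition fluxg :: "state \<Rightarrow> state" where
  "fluxg u = vector
     [ rho u * vel2 u,
       rho u * vel1 u * vel2 u + p12 u,
       rho u * vel2 u ^ 2 + p22 u,
       E11 u * vel2 u + p12 u * vel1 u,
       E12 u * vel2 u + (p12 u * vel2 u + p22 u * vel1 u) / 2,
       (E22 u + p22 u) * vel2 u ]"

definition alphax :: "state \<Rightarrow> real" where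
  "alphax u = \<bar>vel1 u\<bar> + sqrt (3 * p11 u / rho u)"
definition alphay :: "state \<Rightarrow> real" where
  "alphay u = \<bar>vel2 u\<bar> + sqrt (3 * p22 u / rho u)"

definition wxplus :: "state \<Rightarrow> state" where
  "wxplus u = (1/2) *\<^sub>R (u + (1 / alphax u) *\<^sub>R fluxf u)"
definition wxminus :: "state \<Rightarrow> state" where
  "wxminus u = (1/2) *\<^sub>R (u - (1 / alphax u) *\<^sub>R fluxf u)"
definition wyplus :: "state \<Rightarrow> state" where
  "wyplus u = (1/2) *\<^sub>R (u + (1 / alphay u) *\<^sub>R fluxg u)"
definition wyminus :: "state \<Rightarrow> state" where
  "wyminus u = (1/2) *\<^sub>R (u - (1 / alphay u) *\<^sub>R fluxg u)"

text \<open>Normalized end-point weight of the N-point Gauss--Lobatto rule on [0,1]: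
  w_1 = w_N = 1/(N(N-1)) (the rule on [-1,1] has end weights 2/(N(N-1))).\<close>
definition gl_end_weight :: "nat \<Rightarrow> real" where
  "gl_end_weight N = 1 / (real N * (real N - 1))"

text \<open>Mesh data: u i j = u^n_{ij}; wxp i j = w^{x,+}_{i+1/2,j}, wxm i j = w^{x,-}_{i+1/2,j};
  wyp i j = w^{y,+}_{i,j+1/2}, wym i j = w^{y,-}_{i,j+1/2}.\<close>

definition alphax_half :: "(int \<Rightarrow> int \<Rightarrow> state) \<Rightarrow> int \<Rightarrow> int \<Rightarrow> real" where
  "alphax_half u i j = max (alphax (u i j)) (alphax (u (i+1) j))"
definition alphay_half :: "(int \<Rightarrow> int \<Rightarrow> state) \<Rightarrow> int \<Rightarrow> int \<Rightarrow> real" where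
  "alphay_half u i j = max (alphay (u i j)) (alphay (u i (j+1)))"

definition numflux_x :: "(int \<Rightarrow> int \<Rightarrow> state) \<Rightarrow> (int \<Rightarrow> int \<Rightarrow> state) \<Rightarrow> (int \<Rightarrow> int \<Rightarrow> state)
     \<Rightarrow> int \<Rightarrow> int \<Rightarrow> state" where
  "numflux_x u wxp wxm i j = alphax_half u i j *\<^sub>R (wxp i j - wxm i j)"
definition numflux_y :: "(int \<Rightarrow> int \<Rightarrow> state) \<Rightarrow> (int \<Rightarrow> int \<Rightarrow> state) \<Rightarrow> (int \<Rightarrow> int \<Rightarrow> state)
     \<Rightarrow> int \<Rightarrow> int \<Rightarrow> state" where
  "numflux_y u wyp wym i j = alphay_half u i j *\<^sub>R (wyp i j - wym i j)"

definition euler_step ::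
  "real \<Rightarrow> real \<Rightarrow> real \<Rightarrow> (int \<Rightarrow> int \<Rightarrow> state) \<Rightarrow> (int \<Rightarrow> int \<Rightarrow> state) \<Rightarrow> (int \<Rightarrow> int \<Rightarrow> state)
   \<Rightarrow> (int \<Rightarrow> int \<Rightarrow> state) \<Rightarrow> (int \<Rightarrow> int \<Rightarrow> state) \<Rightarrow> int \<Rightarrow> int \<Rightarrow> state" where
  "euler_step dt dx dy u wxp wxm wyp wym i j =
     u i j - (dt / dx) *\<^sub>R (numflux_x u wxp wxm i j - numflux_x u wxp wxm (i-1) j)
           - (dt / dy) *\<^sub>R (numflux_y u wyp wym i j - numflux_y u wyp wym i (j-1))"

end

theory Submission
  imports Defs
begin

lemma Q_eq:
  assumes "rho u > 0"
  shows "p11 u * a^2 + 2*p12 u*a*b + p22 u * b^2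
       = 2*(u$4*a^2 + 2*u$5*a*b + u$6*b^2) - (u$2*a + u$3*b)^2 / u$1"
  using assms unfolding p11_def p12_def p22_def rho_def vel1_def vel2_def E11_def E12_def E22_def
  by (simp add: field_simps power2_eq_square)

lemma adm_iff: "admissible u \<longleftrightarrow> u$1 > 0 \<and> (\<forall>a b. (a,b) \<noteq> (0,0) \<longrightarrow>
   2*(u$4*a^2 + 2*u$5*a*b + u$6*b^2) - (u$2*a + u$3*b)^2 / u$1 > 0)"
  unfolding admissible_def using Q_eq[of u] by (auto simp: rho_def)

lemma key_ineq:
  fixes r1 r2 s t :: real
  assumes "r1 > 0" "r2 > 0"
  shows "(s+t)^2/(r1+r2) \<le> s^2/r1 + t^2/r2"
proof -
  have "(s+t)^2 * (r1*r2) \<le> (s^2*r2 + t^2*r1) * (r1+r2)"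
  proof -
    have "0 \<le> (s*r2 - t*r1)^2" by simp
    then show ?thesis by (simp add: power2_eq_square algebra_simps)
  qed
  then show ?thesis using assms by (simp add: field_simps)
qed

lemma adm_add: assumes "admissible x" "admissible y" shows "admissible (x+y)"
proof -
  have x1: "x$1 > 0" and y1: "y$1 > 0" using assms by (auto simp: adm_iff)
  show ?thesis unfolding adm_iff
  proof (intro conjI allI impI)
    show "(x+y)$1 > 0" using x1 y1 by simp
    fix a b :: real assume ab: "(a,b) \<noteq> (0,0)"
    have qx: "2*(x$4*a^2 + 2*x$5*a*b + x$6*b^2) - (x$2*a + x$3*b)^2 / x$1 > 0"
      using assms(1) ab by (auto simp: adm_iff)
    have qy: "2*(y$4*a^2 + 2*y$5*a*b + y$6*b^2) - (y$2*a + y$3*b)^2 / y$1 > 0"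
      using assms(2) ab by (auto simp: adm_iff)
    have k: "((x$2*a + x$3*b) + (y$2*a + y$3*b))^2 / (x$1 + y$1)
       \<le> (x$2*a + x$3*b)^2 / x$1 + (y$2*a + y$3*b)^2 / y$1"
      by (rule key_ineq[OF x1 y1])
    show "2*((x+y)$4*a^2 + 2*(x+y)$5*a*b + (x+y)$6*b^2) - ((x+y)$2*a + (x+y)$3*b)^2 / (x+y)$1 > 0"
      using qx qy k by (simp add: algebra_simps)
  qed
qed

lemma adm_scale: assumes "admissible x" "c > 0" shows "admissible (c *\<^sub>R x)"
proof -
  have x1: "x$1 > 0" using assms by (auto simp: adm_iff)
  show ?thesis unfolding adm_iff
  proof (intro conjI allI impI)
    show "(c *\<^sub>R x)$1 > 0" using x1 assms by simp
    fix a b :: real assume ab: "(a,b) \<noteq> (0,0)"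
    have qx: "2*(x$4*a^2 + 2*x$5*a*b + x$6*b^2) - (x$2*a + x$3*b)^2 / x$1 > 0"
      using assms(1) ab by (auto simp: adm_iff)
    have e: "2*((c *\<^sub>R x)$4*a^2 + 2*(c *\<^sub>R x)$5*a*b + (c *\<^sub>R x)$6*b^2) - ((c *\<^sub>R x)$2*a + (c *\<^sub>R x)$3*b)^2 / (c *\<^sub>R x)$1
       = c * (2*(x$4*a^2 + 2*x$5*a*b + x$6*b^2) - (x$2*a + x$3*b)^2 / x$1)"
      using assms(2) x1 by (simp add: field_simps power2_eq_square)
    show "2*((c *\<^sub>R x)$4*a^2 + 2*(c *\<^sub>R x)$5*a*b + (c *\<^sub>R x)$6*b^2) - ((c *\<^sub>R x)$2*a + (c *\<^sub>R x)$3*b)^2 / (c *\<^sub>R x)$1 > 0"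
      unfolding e using qx assms(2) by simp
  qed
qed

definition adm0 :: "state \<Rightarrow> bool" where "adm0 x \<longleftrightarrow> x = 0 \<or> admissible x"

lemma adm0_scale: "c \<ge> 0 \<Longrightarrow> admissible x \<Longrightarrow> adm0 (c *\<^sub>R x)"
  unfolding adm0_def using adm_scale[of x c] by (cases "c = 0") auto

lemma adm0_add: "adm0 x \<Longrightarrow> adm0 y \<Longrightarrow> adm0 (x + y)"
  unfolding adm0_def using adm_add by auto

lemma adm_add0: "admissible x \<Longrightarrow> adm0 y \<Longrightarrow> admissible (x + y)"
  unfolding adm0_def using adm_add by auto

lemma adm_p11: "admissible u \<Longrightarrow> p11 u > 0 \<and> p22 u > 0 \<and> rho u > 0"
  unfolding admissible_def
  apply (intro conjI)
  apply (drule conjunct2, drule spec[of _ 1], drule spec[of _ 0], simp)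
  apply (drule conjunct2, drule spec[of _ 0], drule spec[of _ 1], simp)
  by simp

lemma alphax_pos: "admissible u \<Longrightarrow> alphax u > 0"
  using adm_p11[of u] unfolding alphax_def
  by (smt (verit) divide_pos_pos real_sqrt_gt_zero)
lemma alphay_pos: "admissible u \<Longrightarrow> alphay u > 0"
  using adm_p11[of u] unfolding alphay_def
  by (smt (verit) divide_pos_pos real_sqrt_gt_zero)

lemma wx_sum: "wxplus u + wxminus u = u"
  unfolding wxplus_def wxminus_def by (simp add: algebra_simps scaleR_2[symmetric])
lemma wy_sum: "wyplus u + wyminus u = u"
  unfolding wyplus_def wyminus_def by (simp add: algebra_simps scaleR_2[symmetric])

theorem theorem4:
  fixes u wxp wxm wyp wym :: "int \<Rightarrow> int \<Rightarrow> real ^ 6"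
    and dt dx dy :: real and N :: nat
  assumes N: "N \<ge> 4"
    and pos: "dt > 0" "dx > 0" "dy > 0"
    and bdd: "bdd_above (range (\<lambda>(i, j). alphax (u i j)))"
             "bdd_above (range (\<lambda>(i, j). alphay (u i j)))"
    and adm_u: "\<forall>i j. admissible (u i j)"
    and adm_x: "\<forall>i j.
        admissible ((1 / (1 - gl_end_weight N)) *\<^sub>R
                      (wxplus (u i j) - gl_end_weight N *\<^sub>R wxp i j))
      \<and> admissible ((1 / (1 - gl_end_weight N)) *\<^sub>R
                      (wxminus (u i j) - gl_end_weight N *\<^sub>R wxm (i - 1) j))
      \<and> admissible (wxp i j) \<and> admissible (wxm i j)"
    and adm_y: "\<forall>i j.
        admissible ((1 / (1 - gl_end_weight N)) *\<^sub>R
                      (wyplus (u i j) - gl_end_weight N *\<^sub>R wyp i j))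
      \<and> admissible ((1 / (1 - gl_end_weight N)) *\<^sub>R
                      (wyminus (u i j) - gl_end_weight N *\<^sub>R wym i (j - 1)))
      \<and> admissible (wyp i j) \<and> admissible (wym i j)"
    and cfl: "((SUP (i, j). alphax (u i j)) / dx + (SUP (i, j). alphay (u i j)) / dy) * dt
                \<le> gl_end_weight N"
  shows "\<forall>i j. admissible (euler_step dt dx dy u wxp wxm wyp wym i j)"
  proof (intro allI)
  fix i j
  define W where "W = gl_end_weight N"
  have NN: "real N * (real N - 1) \<ge> 12"
  proof -
    have "real N \<ge> 4" using N by simp
    then have "real N * (real N - 1) \<ge> 4 * 3" by (intro mult_mono) auto
    then show ?thesis by simp
  qed
  have W0: "W > 0" unfolding W_def gl_end_weight_def using NN by simp
  have W1: "W < 1" unfolding W_def gl_end_weight_def using NN by simp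
  define Sx where "Sx = (SUP (i, j). alphax (u i j))"
  define Sy where "Sy = (SUP (i, j). alphay (u i j))"
  have Sxu: "alphax (u k l) \<le> Sx" for k l
    unfolding Sx_def using cSUP_upper[OF UNIV_I bdd(1), of "(k,l)"] by simp
  have Syu: "alphay (u k l) \<le> Sy" for k l
    unfolding Sy_def using cSUP_upper[OF UNIV_I bdd(2), of "(k,l)"] by simp
  define A where "A = alphax_half u i j"
  define B where "B = alphax_half u (i-1) j"
  define C where "C = alphay_half u i j"
  define D where "D = alphay_half u i (j-1)"
  have A: "0 \<le> A" "A \<le> Sx" unfolding A_def alphax_half_def
    using Sxu alphax_pos adm_u by (auto intro: less_imp_le simp: max_def)
  have B: "0 \<le> B" "B \<le> Sx" unfolding B_def alphax_half_def
    using Sxu alphax_pos adm_u by (auto intro: less_imp_le simp: max_def)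
  have C: "0 \<le> C" "C \<le> Sy" unfolding C_def alphay_half_def
    using Syu alphay_pos adm_u by (auto intro: less_imp_le simp: max_def)
  have D: "0 \<le> D" "D \<le> Sy" unfolding D_def alphay_half_def
    using Syu alphay_pos adm_u by (auto intro: less_imp_le simp: max_def)
  have Sxp: "Sx > 0" using Sxu[of i j] alphax_pos[of "u i j"] adm_u by auto
  define lx where "lx = dt / dx"
  define ly where "ly = dt / dy"
  have lx: "lx > 0" "ly > 0" unfolding lx_def ly_def using pos by auto
  have cfl': "lx * Sx + ly * Sy \<le> W"
    using cfl unfolding lx_def ly_def Sx_def[symmetric] Sy_def[symmetric] W_def[symmetric]
    by (simp add: algebra_simps)
  define tx where "tx = lx * Sx / W"
  define ty where "ty = 1 - tx"
  have txW: "tx * W = lx * Sx" unfolding tx_def using W0 by simp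
  have tyW: "ty * W \<ge> ly * Sy" unfolding ty_def using txW cfl' by (simp add: algebra_simps)
  have tx0: "tx > 0" unfolding tx_def using lx Sxp W0 by simp
  have "ly * Sy \<ge> 0" using lx C by simp
  then have "ty * W \<ge> 0" using tyW by linarith
  then have ty0: "ty \<ge> 0" using W0 by (simp add: zero_le_mult_iff)
  define qxp where "qxp = (1 / (1 - W)) *\<^sub>R (wxplus (u i j) - W *\<^sub>R wxp i j)"
  define qxm where "qxm = (1 / (1 - W)) *\<^sub>R (wxminus (u i j) - W *\<^sub>R wxm (i - 1) j)"
  define qyp where "qyp = (1 / (1 - W)) *\<^sub>R (wyplus (u i j) - W *\<^sub>R wyp i j)"
  define qym where "qym = (1 / (1 - W)) *\<^sub>R (wyminus (u i j) - W *\<^sub>R wym i (j - 1))"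
  have aq: "admissible qxp" "admissible qxm" "admissible qyp" "admissible qym"
    using adm_x adm_y unfolding qxp_def qxm_def qyp_def qym_def W_def by auto
  have inv: "(1 - W) *\<^sub>R ((1 / (1 - W)) *\<^sub>R v) = v" for v :: state
    using W1 by simp
  have hxp: "wxplus (u i j) = (1 - W) *\<^sub>R qxp + W *\<^sub>R wxp i j"
    unfolding qxp_def inv by simp
  have hxm: "wxminus (u i j) = (1 - W) *\<^sub>R qxm + W *\<^sub>R wxm (i - 1) j"
    unfolding qxm_def inv by simp
  have hyp: "wyplus (u i j) = (1 - W) *\<^sub>R qyp + W *\<^sub>R wyp i j"
    unfolding qyp_def inv by simp
  have hym: "wyminus (u i j) = (1 - W) *\<^sub>R qym + W *\<^sub>R wym i (j - 1)"
    unfolding qym_def inv by simp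
  define X where "X = (tx * (1 - W)) *\<^sub>R qxp + (tx * W - lx * A) *\<^sub>R wxp i j
     + (tx * (1 - W)) *\<^sub>R qxm + (tx * W - lx * B) *\<^sub>R wxm (i - 1) j
     + (lx * A) *\<^sub>R wxm i j + (lx * B) *\<^sub>R wxp (i - 1) j"
  define Y where "Y = (ty * (1 - W)) *\<^sub>R qyp + (ty * W - ly * C) *\<^sub>R wyp i j
     + (ty * (1 - W)) *\<^sub>R qym + (ty * W - ly * D) *\<^sub>R wym i (j - 1)
     + (ly * C) *\<^sub>R wym i j + (ly * D) *\<^sub>R wyp i (j - 1)"
  have X': "X = tx *\<^sub>R (wxplus (u i j) + wxminus (u i j))
      - lx *\<^sub>R (A *\<^sub>R (wxp i j - wxm i j) - B *\<^sub>R (wxp (i - 1) j - wxm (i - 1) j))"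
    unfolding X_def hxp hxm by (simp add: algebra_simps)
  have Y': "Y = ty *\<^sub>R (wyplus (u i j) + wyminus (u i j))
      - ly *\<^sub>R (C *\<^sub>R (wyp i j - wym i j) - D *\<^sub>R (wyp i (j - 1) - wym i (j - 1)))"
    unfolding Y_def hyp hym by (simp add: algebra_simps)
  have E: "euler_step dt dx dy u wxp wxm wyp wym i j = X + Y"
    unfolding X' Y' wx_sum wy_sum euler_step_def numflux_x_def numflux_y_def
      A_def B_def C_def D_def lx_def ly_def ty_def
    by (simp add: algebra_simps)
  have c1: "tx * W - lx * A \<ge> 0" "tx * W - lx * B \<ge> 0"
    using txW A B lx by (simp_all add: mult_left_mono)
  have c2: "ty * W - ly * C \<ge> 0" "ty * W - ly * D \<ge> 0"
    using tyW C D lx mult_left_mono[of C Sy ly] mult_left_mono[of D Sy ly] by linarith+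
  have XA: "admissible X"
    unfolding X_def add.assoc
    apply (rule adm_add0)
     apply (rule adm_scale[OF aq(1)]) using tx0 W1 apply simp
    using adm0_add adm0_scale c1 A B lx tx0 W1 aq adm_x
    by (auto intro!: adm0_add adm0_scale)
  have YA: "adm0 Y"
    unfolding Y_def
    using c2 C D lx ty0 W1 aq adm_y
    by (auto intro!: adm0_add adm0_scale)
  show "admissible (euler_step dt dx dy u wxp wxm wyp wym i j)"
    unfolding E using adm_add0[OF XA YA] .
qed

end
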